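(* Let $V:[-1,1]\to[0,\infty)$ be continuous, write $V(\lambda)$ for $V(\cos\lambda)$, assume $\lambda\mapsto V(\lambda)$ is $C^2(-\pi,\pi)$ and that there exist an interval $(a,b)\subset\sigma$ and constants $C_1,C_2>0$ with $\sup_{(a,b)}|V'''|\le C_1$ and $\rho\ge C_2$ on $(a,b)$. Then for any $\delta>0$, all $n$ and all $\lambda\in[-\pi,\pi]$ (all integrals over $[-\pi,\pi]$): $$\Big|\int(e^{i\lambda}-e^{i\mu})|K_n(\lambda,\mu)|^2d\mu\Big|\le\tfrac12\big[|\psi_{n-1}^{(n)}(\lambda)|^2+|\psi_n^{(n)}(\lambda)|^2\big],$$ $$\int|e^{i\lambda}-e^{i\mu}|^2|K_n(\lambda,\mu)|^2d\mu\le|\psi_{n-1}^{(n)}(\lambda)|^2+|\psi_n^{(n)}(\lambda)|^2,$$ $$\iint|e^{i\lambda}-e^{i\mu}|^2|K_n(\lambda,\mu)|^2d\lambda\,d\mu\le2,$$ $$\int_{|e^{i\lambda}-e^{i\mu}|>\delta}|K_n(\lambda,\mu)|^2d\mu\le\delta^{-2}\big[|\psi_{n-1}^{(n)}(\lambda)|^2+|\psi_n^{(n)}(\lambda)|^2\big],$$ $$\iint_{|e^{i\lambda}-e^{i\mu}|>\delta}|K_n(\lambda,\mu)|^2d\lambda\,d\mu\le2\delta^{-2}.$$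
   Context: For each $n$, let $P_k^{(n)}$, $k=0,1,2,\dots$, be obtained by the Gram–Schmidt procedure from $\{e^{ik\lambda}\}_{k\ge0}$ in $L^2([-\pi,\pi],e^{-nV(\lambda)}d\lambda)$, let $\psi_k^{(n)}(\lambda)=P_k^{(n)}(\lambda)e^{-nV(\lambda)/2}$ (orthonormal in $L^2[-\pi,\pi]$), and $K_n(\lambda,\mu)=\sum_{l=0}^{n-1}\psi_l^{(n)}(\lambda)\overline{\psi_l^{(n)}(\mu)}$. Here $\sigma$ and $\rho$ are the support and density of the limiting normalized counting measure of the eigenvalue angles for the density $p_n(\lambda_1,\dots,\lambda_n)=Z_n^{-1}\prod_{j<k}|e^{i\lambda_j}-e^{i\lambda_k}|^2\exp\{-n\sum_jV(\lambda_j)\}$ on $[-\pi,\pi]^n$ (this limit is known to exist, with compact support and bounded density, for $V\in C^2$). *)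

theory Defs
  imports "HOL-Analysis.Analysis" "HOL-Probability.Probability"
begin

definition wt :: "(real \<Rightarrow> real) \<Rightarrow> nat \<Rightarrow> real \<Rightarrow> real" where
  "wt V n x = exp (- real n * V (cos x))"

definition ip :: "(real \<Rightarrow> real) \<Rightarrow> (real \<Rightarrow> complex) \<Rightarrow> (real \<Rightarrow> complex) \<Rightarrow> complex" where
  "ip w f g = integral {-pi..pi} (\<lambda>x. f x * cnj (g x) * complex_of_real (w x))"

definition wnorm :: "(real \<Rightarrow> real) \<Rightarrow> (real \<Rightarrow> complex) \<Rightarrow> real" where
  "wnorm w f = sqrt (Re (ip w f f))"

definition gs_step :: "(real \<Rightarrow> real) \<Rightarrow> (real \<Rightarrow> complex) list \<Rightarrow> (real \<Rightarrow> complex) \<Rightarrow> (real \<Rightarrow> complex)" where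
  "gs_step w ps f =
     (let u = (\<lambda>x. f x - (\<Sum>p\<leftarrow>ps. ip w f p * p x)) in (\<lambda>x. u x / complex_of_real (wnorm w u)))"

primrec gs_list :: "(real \<Rightarrow> real) \<Rightarrow> nat \<Rightarrow> (real \<Rightarrow> complex) list" where
  "gs_list w 0 = []"
| "gs_list w (Suc k) = gs_list w k @ [gs_step w (gs_list w k) (\<lambda>x. exp (\<i> * of_nat k * of_real x))]"

definition OP :: "(real \<Rightarrow> real) \<Rightarrow> nat \<Rightarrow> nat \<Rightarrow> real \<Rightarrow> complex" where
  "OP V n k = gs_list (wt V n) (Suc k) ! k"

definition psi :: "(real \<Rightarrow> real) \<Rightarrow> nat \<Rightarrow> nat \<Rightarrow> real \<Rightarrow> complex" where
  "psi V n k x = OP V n k x * complex_of_real (exp (- real n * V (cos x) / 2))"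

definition Kn :: "(real \<Rightarrow> real) \<Rightarrow> nat \<Rightarrow> real \<Rightarrow> real \<Rightarrow> complex" where
  "Kn V n l m = (\<Sum>j<n. psi V n j l * cnj (psi V n j m))"

definition unnorm_dens :: "(real \<Rightarrow> real) \<Rightarrow> nat \<Rightarrow> (nat \<Rightarrow> real) \<Rightarrow> real" where
  "unnorm_dens V n x =
     (\<Prod>j<n. \<Prod>k\<in>{j<..<n}. (cmod (exp (\<i> * of_real (x j)) - exp (\<i> * of_real (x k))))\<^sup>2)
     * exp (- real n * (\<Sum>j<n. V (cos (x j))))"

definition angle_space :: "nat \<Rightarrow> (nat \<Rightarrow> real) measure" where
  "angle_space n = PiM {..<n} (\<lambda>_. restrict_space lborel {-pi..pi})"

definition Zn :: "(real \<Rightarrow> real) \<Rightarrow> nat \<Rightarrow> real" where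
  "Zn V n = (LINT x | angle_space n. unnorm_dens V n x)"

definition mean_stat :: "(real \<Rightarrow> real) \<Rightarrow> nat \<Rightarrow> (real \<Rightarrow> real) \<Rightarrow> real" where
  "mean_stat V n f =
     (LINT x | angle_space n. (1 / real n) * (\<Sum>j<n. f (x j)) * unnorm_dens V n x) / Zn V n"

definition limit_density :: "(real \<Rightarrow> real) \<Rightarrow> (real \<Rightarrow> real) \<Rightarrow> bool" where
  "limit_density V \<rho> \<longleftrightarrow>
     (\<forall>x. 0 \<le> \<rho> x) \<and> \<rho> integrable_on {-pi..pi} \<and>
     (\<forall>f. continuous_on {-pi..pi} f \<longrightarrow>
        (\<lambda>n. mean_stat V n f) \<longlonglongrightarrow> integral {-pi..pi} (\<lambda>x. f x * \<rho> x))"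

definition supp_dens :: "(real \<Rightarrow> real) \<Rightarrow> real set" where
  "supp_dens \<rho> = {x \<in> {-pi..pi}. \<forall>e>0. integral ({-pi..pi} \<inter> ball x e) \<rho> > 0}"

end

theory Submission
  imports Defs
begin


abbreviation "cc f \<equiv> continuous_on {-pi..pi} f"

lemma ip_int:
  assumes "cc f" "cc g" "cc w"
  shows "(\<lambda>x. f x * cnj (g x) * complex_of_real (w x)) integrable_on {-pi..pi}"
  by (intro integrable_continuous_interval continuous_intros assms)

lemma ip_sum_left:
  assumes "finite A" "\<And>k. k \<in> A \<Longrightarrow> cc (f k)" "cc g" "cc w"
  shows "ip w (\<lambda>x. \<Sum>k\<in>A. c k * f k x) g = (\<Sum>k\<in>A. c k * ip w (f k) g)"
proof -
  have "ip w (\<lambda>x. \<Sum>k\<in>A. c k * f k x) g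
     = integral {-pi..pi} (\<lambda>x. \<Sum>k\<in>A. c k * (f k x * cnj (g x) * complex_of_real (w x)))"
    unfolding ip_def by (simp add: sum_distrib_right mult.assoc)
  also have "\<dots> = (\<Sum>k\<in>A. integral {-pi..pi} (\<lambda>x. c k * (f k x * cnj (g x) * complex_of_real (w x))))"
    by (rule Henstock_Kurzweil_Integration.integral_sum[OF assms(1)])
       (intro integrable_continuous_interval continuous_intros assms; simp)
  also have "\<dots> = (\<Sum>k\<in>A. c k * ip w (f k) g)"
    unfolding ip_def by (simp only: Henstock_Kurzweil_Integration.integral_mult_right)
  finally show ?thesis .
qed

lemma ip_cnj: "ip w g f = cnj (ip w f g)"
  unfolding ip_def Henstock_Kurzweil_Integration.integral_cnj by (simp add: mult_ac)

lemma ip_sum_right: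
  assumes "finite A" "\<And>k. k \<in> A \<Longrightarrow> cc (f k)" "cc g" "cc w"
  shows "ip w g (\<lambda>x. \<Sum>k\<in>A. c k * f k x) = (\<Sum>k\<in>A. cnj (c k) * ip w g (f k))"
proof -
  have "ip w g (\<lambda>x. \<Sum>k\<in>A. c k * f k x) = cnj (ip w (\<lambda>x. \<Sum>k\<in>A. c k * f k x) g)"
    by (rule ip_cnj)
  also have "\<dots> = cnj (\<Sum>k\<in>A. c k * ip w (f k) g)" using ip_sum_left[OF assms] by simp
  also have "\<dots> = (\<Sum>k\<in>A. cnj (c k) * cnj (ip w (f k) g))" by simp
  also have "\<dots> = (\<Sum>k\<in>A. cnj (c k) * ip w g (f k))"
    by (intro sum.cong refl) (metis ip_cnj)
  finally show ?thesis .
qed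

lemma ip_diff_left:
  assumes "cc f" "cc h" "cc g" "cc w"
  shows "ip w (\<lambda>x. f x - h x) g = ip w f g - ip w h g"
proof -
  have e: "(\<lambda>x. (f x - h x) * cnj (g x) * complex_of_real (w x)) = (\<lambda>x. f x * cnj (g x) * complex_of_real (w x) - h x * cnj (g x) * complex_of_real (w x))"
    by (auto simp: algebra_simps)
  show ?thesis unfolding ip_def e by (rule integral_diff[OF ip_int ip_int]; fact)
qed

lemma ip_add_left:
  assumes "cc f" "cc h" "cc g" "cc w"
  shows "ip w (\<lambda>x. f x + h x) g = ip w f g + ip w h g"
proof -
  have e: "(\<lambda>x. (f x + h x) * cnj (g x) * complex_of_real (w x)) = (\<lambda>x. f x * cnj (g x) * complex_of_real (w x) + h x * cnj (g x) * complex_of_real (w x))"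
    by (auto simp: algebra_simps)
  show ?thesis unfolding ip_def e by (rule integral_add[OF ip_int ip_int]; fact)
qed

lemma ip_scale_left:
  assumes "cc f" "cc g" "cc w"
  shows "ip w (\<lambda>x. c * f x) g = c * ip w f g"
proof -
  have e: "(\<lambda>x. (c * f x) * cnj (g x) * complex_of_real (w x)) = (\<lambda>x. c * (f x * cnj (g x) * complex_of_real (w x)))"
    by (auto simp: algebra_simps)
  show ?thesis unfolding ip_def e by (simp only: Henstock_Kurzweil_Integration.integral_mult_right)
qed

lemma ip_div_left:
  assumes "cc f" "cc g" "cc w"
  shows "ip w (\<lambda>x. f x / c) g = ip w f g / c"
proof -
  have "(\<lambda>x. f x / c) = (\<lambda>x. inverse c * f x)" by (simp add: divide_inverse mult.commute)
  then show ?thesis using ip_scale_left[OF assms, of "inverse c"] by (simp add: divide_inverse mult.commute)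
qed

lemma ip_self:
  assumes "cc f" "cc w"
  shows "ip w f f = complex_of_real (integral {-pi..pi} (\<lambda>x. (cmod (f x))\<^sup>2 * w x))"
proof -
  have "ip w f f = integral {-pi..pi} (\<lambda>x. complex_of_real ((cmod (f x))\<^sup>2 * w x))"
    unfolding ip_def by (intro integral_cong) (simp only: complex_norm_square of_real_mult)
  also have "\<dots> = complex_of_real (integral {-pi..pi} (\<lambda>x. (cmod (f x))\<^sup>2 * w x))"
    by (intro integral_unique has_integral_of_real integrable_integral integrable_continuous_interval
        continuous_intros assms)
  finally show ?thesis .
qed



lemma int_exp_zero:
  fixes m :: int assumes "m \<noteq> 0"
  shows "((\<lambda>x. exp (\<i> * of_int m * of_real x)) has_integral 0) {-pi..pi}"
proof -
  define c where "c = \<i> * (of_int m :: complex)"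
  have c0: "c \<noteq> 0" using assms by (simp add: c_def)
  have d: "((\<lambda>z. exp (c * z) / c) has_field_derivative exp (c * of_real x)) (at (of_real x))" for x :: real
    by (rule derivative_eq_intros refl | simp add: c0)+
  have "((\<lambda>x. exp (c * of_real x)) has_integral
          ((\<lambda>x. exp (c * of_real x) / c) pi - (\<lambda>x. exp (c * of_real x) / c) (-pi))) {-pi..pi}"
    by (rule fundamental_theorem_of_calculus) (auto intro: has_vector_derivative_real_field[OF d])
  moreover have "exp (c * of_real pi) = exp (c * of_real (-pi))"
  proof -
    have "c * of_real pi = c * of_real (-pi) + (2 * of_int m * pi) * \<i>"
      by (simp add: c_def algebra_simps)
    then have "exp (c * of_real pi) = exp (c * of_real (-pi)) * exp ((2 * of_int m * pi) * \<i>)"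
      by (metis exp_add)
    also have "exp ((2 * of_int m * pi) * \<i>) = 1" by (rule exp_integer_2pi) simp
    finally show ?thesis by simp
  qed
  ultimately show ?thesis by (simp add: c_def mult.assoc)
qed

definition ef :: "nat \<Rightarrow> real \<Rightarrow> complex" where "ef k x = exp (\<i> * of_nat k * of_real x)"

lemma ef_cont: "continuous_on A (ef k)"
  unfolding ef_def by (intro continuous_intros)

lemma ef_mult_cnj: "ef k x * cnj (ef m x) = exp (\<i> * of_int (int k - int m) * of_real x)"
  unfolding ef_def by (simp add: exp_cnj exp_add[symmetric] algebra_simps)

lemma ip1_ef: "ip (\<lambda>_. 1) (ef k) (ef m) = (if k = m then complex_of_real (2 * pi) else 0)"
proof (cases "k = m")
  case True
  have "ip (\<lambda>_. 1) (ef k) (ef m) = integral {-pi..pi} (\<lambda>x. 1)"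
    unfolding ip_def using True by (simp add: ef_mult_cnj)
  then show ?thesis using True by (simp add: scaleR_conv_of_real)
next
  case False
  have "ip (\<lambda>_. 1) (ef k) (ef m) = integral {-pi..pi} (\<lambda>x. exp (\<i> * of_int (int k - int m) * of_real x))"
    unfolding ip_def by (simp add: ef_mult_cnj)
  also have "\<dots> = 0" using int_exp_zero[of "int k - int m"] False by (simp add: integral_unique)
  finally show ?thesis using False by simp
qed



definition lspan :: "(nat \<Rightarrow> real \<Rightarrow> complex) \<Rightarrow> nat \<Rightarrow> (real \<Rightarrow> complex) \<Rightarrow> bool" where
  "lspan F N f \<longleftrightarrow> (\<exists>c. \<forall>x. f x = (\<Sum>k<N. c k * F k x))"

lemma lspan_base: assumes "k < N" shows "lspan F N (F k)"
proof -
  have "(\<Sum>j<N. (if j = k then 1 else 0) * F j x) = (\<Sum>j<N. if j = k then F k x else 0)" for x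
    by (intro sum.cong) auto
  then have h: "\<forall>x. F k x = (\<Sum>j<N. (if j = k then 1 else 0) * F j x)" using assms by simp
  show ?thesis unfolding lspan_def by (rule exI[of _ "\<lambda>j. if j = k then 1 else 0"]) (rule h)
qed

lemma lspan_zero: "lspan F N (\<lambda>x. 0)"
  unfolding lspan_def by (rule exI[of _ "\<lambda>j. 0"]) simp

lemma lspan_add: "lspan F N f \<Longrightarrow> lspan F N g \<Longrightarrow> lspan F N (\<lambda>x. f x + g x)"
  unfolding lspan_def
proof (elim exE)
  fix c d assume c: "\<forall>x. f x = (\<Sum>k<N. c k * F k x)" and d: "\<forall>x. g x = (\<Sum>k<N. d k * F k x)"
  show "\<exists>e. \<forall>x. f x + g x = (\<Sum>k<N. e k * F k x)"
    by (rule exI[of _ "\<lambda>k. c k + d k"]) (simp add: c d distrib_right sum.distrib)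
qed

lemma lspan_scale: "lspan F N f \<Longrightarrow> lspan F N (\<lambda>x. a * f x)"
  unfolding lspan_def
proof (elim exE)
  fix c assume c: "\<forall>x. f x = (\<Sum>k<N. c k * F k x)"
  show "\<exists>e. \<forall>x. a * f x = (\<Sum>k<N. e k * F k x)"
    by (rule exI[of _ "\<lambda>k. a * c k"]) (simp add: c sum_distrib_left mult.assoc)
qed

lemma lspan_diff: "lspan F N f \<Longrightarrow> lspan F N g \<Longrightarrow> lspan F N (\<lambda>x. f x - g x)"
  using lspan_add[of F N f "\<lambda>x. (-1) * g x"] lspan_scale[of F N g "-1"] by simp

lemma lspan_div: "lspan F N f \<Longrightarrow> lspan F N (\<lambda>x. f x / a)"
  using lspan_scale[of F N f "inverse a"] by (simp add: divide_inverse mult.commute)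

lemma lspan_sum:
  assumes "finite A" "\<And>j. j \<in> A \<Longrightarrow> lspan F N (g j)"
  shows "lspan F N (\<lambda>x. \<Sum>j\<in>A. a j * g j x)"
  using assms
proof (induction A rule: finite_induct)
  case empty then show ?case by (simp add: lspan_zero)
next
  case (insert i A)
  then show ?case by (simp add: lspan_add lspan_scale)
qed

lemma lspan_mono:
  assumes "N \<le> M" "lspan F N f" shows "lspan F M f"
proof -
  obtain c where c: "\<forall>x. f x = (\<Sum>k<N. c k * F k x)" using assms(2) unfolding lspan_def by blast
  have fx: "f x = (\<Sum>k<M. (if k < N then c k else 0) * F k x)" for x
  proof -
    have "(\<Sum>k<M. (if k < N then c k else 0) * F k x) = (\<Sum>k<N. (if k < N then c k else 0) * F k x)"
      by (rule sum.mono_neutral_right) (use assms(1) in auto)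
    then show ?thesis using c by simp
  qed
  show ?thesis unfolding lspan_def by (rule exI[of _ "\<lambda>k. if k < N then c k else 0"]) (use fx in blast)
qed

lemma lspan_trans:
  assumes "\<And>k. k < N \<Longrightarrow> lspan G M (F k)" "lspan F N f" shows "lspan G M f"
proof -
  obtain c where c: "\<forall>x. f x = (\<Sum>k<N. c k * F k x)" using assms(2) unfolding lspan_def by blast
  have "lspan G M (\<lambda>x. \<Sum>k\<in>{..<N}. c k * F k x)" by (rule lspan_sum) (auto intro: assms(1))
  moreover have "f = (\<lambda>x. \<Sum>k\<in>{..<N}. c k * F k x)" using c by auto
  ultimately show ?thesis by simp
qed

lemma lspan_cong: "(\<And>k. k < N \<Longrightarrow> F k = G k) \<Longrightarrow> lspan F N f = lspan G N f"
  unfolding lspan_def by simp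

lemma lspan_cont:
  assumes "\<And>k. k < N \<Longrightarrow> continuous_on S (F k)" "lspan F N f" shows "continuous_on S f"
proof -
  obtain c where c: "\<forall>x. f x = (\<Sum>k<N. c k * F k x)" using assms(2) unfolding lspan_def by blast
  have "f = (\<lambda>x. \<Sum>k<N. c k * F k x)" using c by auto
  moreover have "continuous_on S (\<lambda>x. \<Sum>k<N. c k * F k x)"
    by (intro continuous_intros assms(1)) simp
  ultimately show ?thesis by simp
qed

lemma lspan_ef_cont: "lspan ef N f \<Longrightarrow> continuous_on S f"
  by (rule lspan_cont[OF ef_cont])

lemma OE:
  assumes cw: "cc w" and cF: "\<And>j. j < N \<Longrightarrow> cc (F j)"
    and orth: "\<And>j k. j < N \<Longrightarrow> k < N \<Longrightarrow> ip w (F j) (F k) = (if j = k then 1 else 0)"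
    and sp: "lspan F N f"
  shows "f x = (\<Sum>j<N. ip w f (F j) * F j x)"
proof -
  obtain c where c: "\<forall>x. f x = (\<Sum>k<N. c k * F k x)" using sp unfolding lspan_def by blast
  have fe: "f = (\<lambda>x. \<Sum>k\<in>{..<N}. c k * F k x)" using c by auto
  have "ip w f (F j) = c j" if j: "j < N" for j
  proof -
    have "ip w f (F j) = (\<Sum>k\<in>{..<N}. c k * ip w (F k) (F j))"
      unfolding fe by (rule ip_sum_left) (auto intro: cF cw j)
    also have "\<dots> = (\<Sum>k\<in>{..<N}. (if k = j then c k else 0))"
      by (intro sum.cong refl) (simp add: orth j)
    also have "\<dots> = c j" using j by simp
    finally show ?thesis .
  qed
  then show ?thesis using c by simp
qed



lemma gs_len: "length (gs_list w N) = N" by (induction N) auto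

lemma gs_nth: "j < N \<Longrightarrow> gs_list w N ! j = gs_list w (Suc j) ! j"
  by (induction N) (auto simp: nth_append gs_len less_Suc_eq)

lemma gs_last: "gs_list w (Suc N) ! N = gs_step w (gs_list w N) (ef N)"
  by (simp add: nth_append gs_len ef_def[abs_def])

lemma sum_list_map_nth: "(\<Sum>p\<leftarrow>ps. g p) = (\<Sum>j<length ps. g (ps ! j))"
  by (simp add: sum_list_sum_nth atLeast0LessThan)

definition gq :: "(real \<Rightarrow> real) \<Rightarrow> nat \<Rightarrow> real \<Rightarrow> complex" where
  "gq w j = gs_list w (Suc j) ! j"

lemma GS:
  assumes cw: "cc w" and wp: "\<And>x. x \<in> {-pi..pi} \<Longrightarrow> 0 < w x"
  shows "(\<forall>j<N. lspan ef (Suc j) (gq w j)) \<and>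
         (\<forall>j<N. \<forall>k<N. ip w (gq w j) (gq w k) = (if j = k then 1 else 0)) \<and>
         (\<forall>k<N. lspan (gq w) N (ef k))"
proof (induction N)
  case 0
  then show ?case by simp
next
  case (Suc N)
  have sp: "\<And>j. j < N \<Longrightarrow> lspan ef (Suc j) (gq w j)"
    and orth: "\<And>j k. j < N \<Longrightarrow> k < N \<Longrightarrow> ip w (gq w j) (gq w k) = (if j = k then 1 else 0)"
    and sp2: "\<And>k. k < N \<Longrightarrow> lspan (gq w) N (ef k)" using Suc.IH by auto
  have spN: "\<And>j. j < N \<Longrightarrow> lspan ef N (gq w j)"
    using sp lspan_mono by (metis Suc_leI)
  have ccQ: "\<And>j S. j < N \<Longrightarrow> continuous_on S (gq w j)"
    using sp lspan_ef_cont by blast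
  define G where "G = (\<lambda>x. \<Sum>j\<in>{..<N}. ip w (ef N) (gq w j) * gq w j x)"
  define u where "u = (\<lambda>x. ef N x - G x)"
  define I where "I = integral {-pi..pi} (\<lambda>x. (cmod (u x))\<^sup>2 * w x)"
  define r where "r = wnorm w u"
  have ps: "\<And>j. j < N \<Longrightarrow> gs_list w N ! j = gq w j" unfolding gq_def by (rule gs_nth)
  have qN: "gq w N = (\<lambda>x. u x / of_real r)"
  proof -
    have "(\<Sum>p\<leftarrow>gs_list w N. ip w (ef N) p * p x) = G x" for x
      unfolding sum_list_map_nth gs_len G_def by (intro sum.cong refl) (simp add: ps)
    then show ?thesis
      unfolding gq_def gs_last gs_step_def Let_def r_def u_def by simp
  qed
  have Gspan: "lspan ef N G" unfolding G_def by (rule lspan_sum) (auto intro: spN)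
  have uspan: "lspan ef (Suc N) u" unfolding u_def
    by (intro lspan_diff lspan_base lspan_mono[OF _ Gspan]) auto
  have ucc: "continuous_on S u" for S using uspan by (rule lspan_ef_cont)
  have Gcc: "continuous_on S G" for S using Gspan by (rule lspan_ef_cont)
  have uorth: "ip w u (gq w k) = 0" if k: "k < N" for k
  proof -
    have "ip w u (gq w k) = ip w (ef N) (gq w k) - ip w G (gq w k)"
      unfolding u_def by (rule ip_diff_left) (auto intro: ef_cont Gcc ccQ k cw)
    also have "ip w G (gq w k) = (\<Sum>j\<in>{..<N}. ip w (ef N) (gq w j) * ip w (gq w j) (gq w k))"
      unfolding G_def by (rule ip_sum_left) (auto intro: ccQ k cw)
    also have "\<dots> = (\<Sum>j\<in>{..<N}. if j = k then ip w (ef N) (gq w k) else 0)"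
      by (intro sum.cong refl) (simp add: orth k)
    also have "\<dots> = ip w (ef N) (gq w k)" using k by simp
    finally show ?thesis by simp
  qed
  have w0: "\<And>x. x \<in> {-pi..pi} \<Longrightarrow> 0 \<le> w x" using wp by (simp add: less_imp_le)
  have intI: "(\<lambda>x. (cmod (u x))\<^sup>2 * w x) integrable_on {-pi..pi}"
    by (intro integrable_continuous_interval continuous_intros ucc cw)
  have I0: "0 \<le> I" unfolding I_def
    by (rule integral_nonneg[OF intI]) (auto intro!: mult_nonneg_nonneg w0)
  have Ipos: "0 < I"
  proof (rule ccontr)
    assume "\<not> 0 < I"
    then have "I = 0" using I0 by simp
    then have hi: "((\<lambda>x. (cmod (u x))\<^sup>2 * w x) has_integral 0) (cbox (-pi) pi)"
      using intI unfolding I_def by (simp add: has_integral_integral)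
    have boxne: "box (-pi) pi \<noteq> {}" using pi_gt_zero by (simp add: not_le)
    have u0: "u x = 0" if x: "x \<in> {-pi..pi}" for x
    proof -
      have "(cmod (u x))\<^sup>2 * w x = 0"
        by (rule has_integral_0_cbox_imp_0[OF _ _ hi boxne])
           (use x pi_gt_zero in \<open>auto intro!: continuous_intros ucc cw mult_nonneg_nonneg w0\<close>)
      then show ?thesis using wp[OF x] by simp
    qed
    obtain c where c: "\<forall>x. G x = (\<Sum>k<N. c k * ef k x)" using Gspan unfolding lspan_def by blast
    have "complex_of_real (2 * pi) = ip (\<lambda>_. 1) (ef N) (ef N)" by (simp add: ip1_ef)
    also have "\<dots> = ip (\<lambda>_. 1) (\<lambda>x. \<Sum>k\<in>{..<N}. c k * ef k x) (ef N)"
      unfolding ip_def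
    proof (intro integral_cong)
      fix x assume x: "x \<in> {-pi..pi}"
      have "ef N x = G x" using u0[OF x] unfolding u_def by simp
      then show "ef N x * cnj (ef N x) * complex_of_real 1 =
          (\<Sum>k\<in>{..<N}. c k * ef k x) * cnj (ef N x) * complex_of_real 1" using c by simp
    qed
    also have "\<dots> = (\<Sum>k\<in>{..<N}. c k * ip (\<lambda>_. 1) (ef k) (ef N))"
      by (rule ip_sum_left) (auto intro: ef_cont)
    also have "\<dots> = 0" by (intro sum.neutral) (simp add: ip1_ef)
    finally show False using pi_gt_zero by simp
  qed
  have ipuu: "ip w u u = complex_of_real I" unfolding I_def by (rule ip_self[OF ucc cw])
  have r: "r = sqrt I" unfolding r_def wnorm_def ipuu by simp
  have rpos: "0 < r" using Ipos r by simp
  have r2: "r\<^sup>2 = I" using I0 r by simp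
  have qorth: "ip w (gq w N) (gq w k) = 0" if "k < N" for k
    unfolding qN by (subst ip_div_left) (auto intro: ucc ccQ that cw simp: uorth that)
  have qq: "ip w (gq w N) (gq w N) = 1"
  proof -
    have "ip w (gq w N) (gq w N) = complex_of_real (integral {-pi..pi} (\<lambda>x. (cmod (gq w N x))\<^sup>2 * w x))"
      using rpos by (intro ip_self) (auto simp: qN intro!: continuous_intros ucc cw)
    also have "(\<lambda>x. (cmod (gq w N x))\<^sup>2 * w x) = (\<lambda>x. (cmod (u x))\<^sup>2 * w x / r\<^sup>2)"
      using rpos by (auto simp: qN norm_divide power_divide)
    also have "integral {-pi..pi} \<dots> = I / r\<^sup>2"
      unfolding I_def by (rule Henstock_Kurzweil_Integration.integral_divide)
    finally show ?thesis using r2 Ipos by simp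
  qed
  have ccQ': "\<And>j S. j < Suc N \<Longrightarrow> continuous_on S (gq w j)"
    using ccQ ucc rpos by (auto simp: less_Suc_eq qN intro!: continuous_intros)
  have G2: "\<forall>j<Suc N. lspan ef (Suc j) (gq w j)"
    using sp uspan by (auto simp: less_Suc_eq qN intro: lspan_div)
  have G3: "\<forall>j<Suc N. \<forall>k<Suc N. ip w (gq w j) (gq w k) = (if j = k then 1 else 0)"
  proof (intro allI impI)
    fix j k assume j: "j < Suc N" and k: "k < Suc N"
    show "ip w (gq w j) (gq w k) = (if j = k then 1 else 0)"
    proof (cases "j < N")
      case True
      then show ?thesis
      proof (cases "k < N")
        case True
        then show ?thesis using \<open>j < N\<close> orth by simp
      next
        case False
        then have "k = N" using k by simp
        then show ?thesis using \<open>j < N\<close> qorth ip_cnj[of w "gq w j" "gq w N"] by simp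
      qed
    next
      case False
      then have jN: "j = N" using j by simp
      then show ?thesis
      proof (cases "k < N")
        case True
        then show ?thesis using jN qorth by simp
      next
        case False
        then have "k = N" using k by simp
        then show ?thesis using jN qq by simp
      qed
    qed
  qed
  have G4: "\<forall>k<Suc N. lspan (gq w) (Suc N) (ef k)"
  proof (intro allI impI)
    fix k assume k: "k < Suc N"
    show "lspan (gq w) (Suc N) (ef k)"
    proof (cases "k < N")
      case True
      then show ?thesis using sp2 lspan_mono by (metis le_SucI order_refl)
    next
      case False
      then have kN: "k = N" using k by simp
      have e: "ef N = (\<lambda>x. complex_of_real r * gq w N x + (\<Sum>j\<in>{..<N}. ip w (ef N) (gq w j) * gq w j x))"
        using rpos by (auto simp: qN u_def G_def)
      have "lspan (gq w) (Suc N) (\<lambda>x. complex_of_real r * gq w N x + (\<Sum>j\<in>{..<N}. ip w (ef N) (gq w j) * gq w j x))"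
        by (intro lspan_add lspan_scale lspan_base lspan_sum) auto
      then show ?thesis using kN e by simp
    qed
  qed
  show ?case using G2 G3 G4 by blast
qed



lemma ef1: "ef 1 x = exp (\<i> * of_real x)" by (simp add: ef_def)

lemma ef_mult: "ef 1 x * ef k x = ef (Suc k) x"
  unfolding ef_def by (simp add: exp_add[symmetric] algebra_simps)

lemma lspan_ef_mult: assumes "lspan ef N f" shows "lspan ef (Suc N) (\<lambda>x. ef 1 x * f x)"
proof -
  obtain c where c: "\<forall>x. f x = (\<Sum>k<N. c k * ef k x)" using assms unfolding lspan_def by blast
  have "lspan ef (Suc N) (\<lambda>x. \<Sum>k\<in>{..<N}. c k * ef (Suc k) x)"
    by (rule lspan_sum) (auto intro: lspan_base)
  moreover have "(\<lambda>x. ef 1 x * f x) = (\<lambda>x. \<Sum>k\<in>{..<N}. c k * ef (Suc k) x)"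
  proof
    fix x
    have "ef 1 x * f x = (\<Sum>k<N. ef 1 x * (c k * ef k x))" using c by (simp add: sum_distrib_left)
    also have "\<dots> = (\<Sum>k<N. c k * ef (Suc k) x)"
      by (intro sum.cong refl) (metis ef_mult mult.left_commute)
    finally show "ef 1 x * f x = (\<Sum>k\<in>{..<N}. c k * ef (Suc k) x)" .
  qed
  ultimately show ?thesis by simp
qed

lemma key:
  fixes w s :: "real \<Rightarrow> real" and n :: nat and l :: real
  assumes cw: "cc w" and wp: "\<And>x. x \<in> {-pi..pi} \<Longrightarrow> 0 < w x"
    and s0: "\<And>x. 0 \<le> s x" and sw: "\<And>x. (s x)\<^sup>2 = w x" and n: "1 \<le> n"
    and P: "\<And>j x. P j x = gq w j x * complex_of_real (s x)"
    and K: "\<And>m. K m = (\<Sum>j<n. P j l * cnj (P j m))"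
    and c: "c = ip w (\<lambda>x. ef 1 x * gq w (n - 1) x) (gq w n)"
  shows "integral {-pi..pi} (\<lambda>m. (exp (\<i> * of_real l) - exp (\<i> * of_real m)) * complex_of_real ((cmod (K m))\<^sup>2))
     = cnj (P (n - 1) l) * c * P n l"
proof -
  obtain n' where n': "n = Suc n'" using n by (cases n) auto
  define Q where "Q = gq w"
  have GS1: "(\<forall>j<Suc n. lspan ef (Suc j) (Q j)) \<and>
         (\<forall>j<Suc n. \<forall>k<Suc n. ip w (Q j) (Q k) = (if j = k then 1 else 0)) \<and>
         (\<forall>k<Suc n. lspan Q (Suc n) (ef k))" unfolding Q_def by (rule GS[OF cw wp])
  have GS0: "\<forall>k<n. lspan Q n (ef k)" using GS[OF cw wp, of n] unfolding Q_def by blast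
  have sp: "\<And>j. j \<le> n \<Longrightarrow> lspan ef (Suc j) (Q j)" using GS1 by auto
  have orth: "\<And>j k. j \<le> n \<Longrightarrow> k \<le> n \<Longrightarrow> ip w (Q j) (Q k) = (if j = k then 1 else 0)"
    using GS1 by auto
  have spQ1: "\<And>k. k < Suc n \<Longrightarrow> lspan Q (Suc n) (ef k)" using GS1 by auto
  have spQ: "\<And>k. k < n \<Longrightarrow> lspan Q n (ef k)" using GS0 by auto
  have Qc: "\<And>j S. j \<le> n \<Longrightarrow> continuous_on S (Q j)" using sp lspan_ef_cont by blast
  have orth1: "\<And>j k. j < n \<Longrightarrow> k < n \<Longrightarrow> ip w (Q j) (Q k) = (if j = k then 1 else 0)"
    using orth by simp
  have orth2: "\<And>j k. j < Suc n \<Longrightarrow> k < Suc n \<Longrightarrow> ip w (Q j) (Q k) = (if j = k then 1 else 0)"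
    using orth by simp
  have OEn: "h x = (\<Sum>j<n. ip w h (Q j) * Q j x)" if "lspan Q n h" for h x
    by (rule OE[OF cw _ orth1 that]) (auto intro: Qc)
  have OEn1: "h x = (\<Sum>j<Suc n. ip w h (Q j) * Q j x)" if "lspan Q (Suc n) h" for h x
    by (rule OE[OF cw _ orth2 that]) (auto intro: Qc)
  have lspanQc: "continuous_on S h" if "lspan Q (Suc n) h" for h S
    by (rule lspan_cont[OF _ that]) (auto intro: Qc)
  define b where "b j = cnj (P j l)" for j
  define G where "G = (\<lambda>m. \<Sum>j\<in>{..<n}. b j * Q j m)"
  have Gsp: "lspan Q n G" unfolding G_def by (rule lspan_sum) (auto intro: lspan_base)
  have Gc: "continuous_on S G" for S unfolding G_def by (intro continuous_intros Qc) auto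
  have RP: "ip w h G = complex_of_real (s l) * h l" if hs: "lspan Q n h" for h
  proof -
    have hc: "cc h" by (rule lspanQc, rule lspan_mono[OF _ hs]) auto
    have "ip w h G = (\<Sum>j\<in>{..<n}. cnj (b j) * ip w h (Q j))"
      unfolding G_def by (rule ip_sum_right) (auto intro: Qc hc cw)
    also have "\<dots> = complex_of_real (s l) * (\<Sum>j<n. ip w h (Q j) * Q j l)"
      by (simp add: b_def P Q_def sum_distrib_left mult_ac)
    also have "(\<Sum>j<n. ip w h (Q j) * Q j l) = h l" using OEn[OF hs] by simp
    finally show ?thesis .
  qed
  have Kform: "complex_of_real ((cmod (K m))\<^sup>2) = G m * cnj (G m) * complex_of_real (w m)" for m
  proof -
    have "K m = complex_of_real (s m) * cnj (G m)"
      by (simp add: K G_def b_def P Q_def sum_distrib_left mult_ac)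
    then have "cmod (K m) = s m * cmod (G m)" using s0[of m] by (simp add: norm_mult)
    then have "(cmod (K m))\<^sup>2 = w m * (cmod (G m))\<^sup>2" by (simp add: power_mult_distrib sw)
    then show ?thesis by (simp only: of_real_mult complex_norm_square mult_ac)
  qed
  define f1 where "f1 = (\<lambda>x. ef 1 x * Q n' x)"
  have f1sp: "lspan Q (Suc n) f1"
  proof (rule lspan_trans[OF spQ1])
    show "lspan ef (Suc n) f1" unfolding f1_def n' by (rule lspan_ef_mult, rule sp) (simp add: n')
  qed
  define R where "R = (\<lambda>x. \<Sum>j\<in>{..<n}. ip w f1 (Q j) * Q j x)"
  have Rsp: "lspan Q n R" unfolding R_def by (rule lspan_sum) (auto intro: lspan_base)
  have f1dec: "f1 x = R x + c * Q n x" for x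
    using OEn1[OF f1sp, of x] by (simp add: R_def c f1_def Q_def n')
  have f1c: "continuous_on S f1" for S using f1sp by (rule lspanQc)
  have Rc: "continuous_on S R" for S by (rule lspanQc, rule lspan_mono[OF _ Rsp]) auto
  define H1 where "H1 = (\<lambda>m. \<Sum>j\<in>{..<n'}. b j * (ef 1 m * Q j m))"
  have H1sp: "lspan Q n H1" unfolding H1_def
  proof (rule lspan_sum)
    fix j assume j: "j \<in> {..<n'}"
    show "lspan Q n (\<lambda>m. ef 1 m * Q j m)"
    proof (rule lspan_trans[OF spQ])
      show "lspan ef n (\<lambda>m. ef 1 m * Q j m)"
        by (rule lspan_mono[OF _ lspan_ef_mult[OF sp]]) (use j n' in auto)
    qed
  qed simp
  have H1c: "continuous_on S H1" for S by (rule lspanQc, rule lspan_mono[OF _ H1sp]) auto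
  have zG: "(\<lambda>m. ef 1 m * G m) = (\<lambda>m. H1 m + b n' * f1 m)"
  proof
    fix m
    have "ef 1 m * G m = ef 1 m * (\<Sum>j<n'. b j * Q j m) + ef 1 m * (b n' * Q n' m)"
      by (simp add: G_def n' distrib_left)
    also have "\<dots> = H1 m + b n' * f1 m"
      by (simp add: sum_distrib_left H1_def f1_def mult.left_commute)
    finally show "ef 1 m * G m = H1 m + b n' * f1 m" .
  qed
  have QnG: "ip w (Q n) G = 0"
  proof -
    have "ip w (Q n) G = (\<Sum>j\<in>{..<n}. cnj (b j) * ip w (Q n) (Q j))"
      unfolding G_def by (rule ip_sum_right) (auto intro: Qc cw)
    also have "\<dots> = 0" by (intro sum.neutral) (simp add: orth)
    finally show ?thesis .
  qed
  have f1G: "ip w f1 G = complex_of_real (s l) * R l"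
  proof -
    have "f1 = (\<lambda>x. R x + c * Q n x)" using f1dec by auto
    then have "ip w f1 G = ip w (\<lambda>x. R x + c * Q n x) G" by simp
    also have "\<dots> = ip w R G + ip w (\<lambda>x. c * Q n x) G"
      by (rule ip_add_left) (auto intro!: continuous_intros Rc Qc Gc cw)
    also have "ip w (\<lambda>x. c * Q n x) G = c * ip w (Q n) G"
      by (rule ip_scale_left) (auto intro: Qc Gc cw)
    finally show ?thesis using QnG RP[OF Rsp] by simp
  qed
  have zGG: "ip w (\<lambda>m. ef 1 m * G m) G = complex_of_real (s l) * (H1 l + b n' * R l)"
  proof -
    have "ip w (\<lambda>m. ef 1 m * G m) G = ip w H1 G + ip w (\<lambda>m. b n' * f1 m) G"
      unfolding zG by (rule ip_add_left) (auto intro!: continuous_intros H1c f1c Gc cw)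
    also have "ip w (\<lambda>m. b n' * f1 m) G = b n' * ip w f1 G"
      by (rule ip_scale_left) (auto intro: f1c Gc cw)
    finally show ?thesis using f1G RP[OF H1sp] by (simp add: algebra_simps)
  qed
  have "integral {-pi..pi} (\<lambda>m. (exp (\<i> * of_real l) - exp (\<i> * of_real m)) * complex_of_real ((cmod (K m))\<^sup>2))
      = ip w (\<lambda>m. ef 1 l * G m - ef 1 m * G m) G"
    unfolding ip_def by (intro integral_cong) (simp only: Kform ef1, simp add: algebra_simps)
  also have "\<dots> = ip w (\<lambda>m. ef 1 l * G m) G - ip w (\<lambda>m. ef 1 m * G m) G"
    by (rule ip_diff_left) (auto intro!: continuous_intros Gc cw ef_cont)
  also have "ip w (\<lambda>m. ef 1 l * G m) G = ef 1 l * ip w G G"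
    by (rule ip_scale_left) (auto intro: Gc cw)
  also have "ip w G G = complex_of_real (s l) * G l" by (rule RP[OF Gsp])
  finally have I: "integral {-pi..pi} (\<lambda>m. (exp (\<i> * of_real l) - exp (\<i> * of_real m)) * complex_of_real ((cmod (K m))\<^sup>2))
      = ef 1 l * (complex_of_real (s l) * G l) - ip w (\<lambda>m. ef 1 m * G m) G" .
  have eG: "ef 1 l * G l = H1 l + b n' * (R l + c * Q n l)"
    using fun_cong[OF zG, of l] f1dec[of l] by simp
  have "ef 1 l * (complex_of_real (s l) * G l) = complex_of_real (s l) * (H1 l + b n' * (R l + c * Q n l))"
    using eG by (metis mult.left_commute)
  then show ?thesis using I unfolding zGG
    by (simp add: b_def P Q_def n' algebra_simps)
qed



lemma gq_facts:
  assumes cw: "cc w" and wp: "\<And>x. x \<in> {-pi..pi} \<Longrightarrow> 0 < w x"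
  shows "continuous_on S (gq w j)" "ip w (gq w j) (gq w j) = 1"
    "integral {-pi..pi} (\<lambda>x. (cmod (gq w j x))\<^sup>2 * w x) = 1"
proof -
  have G: "(\<forall>i<Suc j. lspan ef (Suc i) (gq w i)) \<and>
         (\<forall>i<Suc j. \<forall>k<Suc j. ip w (gq w i) (gq w k) = (if i = k then 1 else 0)) \<and>
         (\<forall>k<Suc j. lspan (gq w) (Suc j) (ef k))" by (rule GS[OF cw wp])
  then show c: "continuous_on S (gq w j)" using lspan_ef_cont by blast
  show o: "ip w (gq w j) (gq w j) = 1" using G by simp
  have c': "cc (gq w j)" using G lspan_ef_cont by blast
  have "complex_of_real (integral {-pi..pi} (\<lambda>x. (cmod (gq w j x))\<^sup>2 * w x)) = 1"
    using ip_self[OF c' cw] o by simp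
  then show "integral {-pi..pi} (\<lambda>x. (cmod (gq w j x))\<^sup>2 * w x) = 1"
    by (metis of_real_eq_1_iff)
qed

lemma c_bound:
  assumes cw: "cc w" and wp: "\<And>x. x \<in> {-pi..pi} \<Longrightarrow> 0 < w x"
  shows "cmod (ip w (\<lambda>x. ef 1 x * gq w m x) (gq w n)) \<le> 1"
proof -
  let ?a = "gq w m" and ?q = "gq w n"
  have ac: "continuous_on S ?a" and qc: "continuous_on S ?q" for S using gq_facts[OF cw wp] by auto
  have w0: "\<And>x. x \<in> {-pi..pi} \<Longrightarrow> 0 \<le> w x" using wp by (simp add: less_imp_le)
  have "cmod (ip w (\<lambda>x. ef 1 x * ?a x) ?q) \<le>
      integral {-pi..pi} (\<lambda>x. ((cmod (?a x))\<^sup>2 * w x + (cmod (?q x))\<^sup>2 * w x) / 2)"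
    unfolding ip_def
  proof (rule integral_norm_bound_integral)
    show "(\<lambda>x. ef 1 x * ?a x * cnj (?q x) * complex_of_real (w x)) integrable_on {-pi..pi}"
      by (intro integrable_continuous_interval continuous_intros ac qc cw ef_cont)
    show "(\<lambda>x. ((cmod (?a x))\<^sup>2 * w x + (cmod (?q x))\<^sup>2 * w x) / 2) integrable_on {-pi..pi}"
      by (intro integrable_continuous_interval continuous_intros ac qc cw) auto
    fix x assume x: "x \<in> {-pi..pi}"
    have "cmod (ef 1 x * ?a x * cnj (?q x) * complex_of_real (w x)) = cmod (?a x) * cmod (?q x) * w x"
      using w0[OF x] by (simp add: norm_mult ef_def)
    also have "\<dots> \<le> ((cmod (?a x))\<^sup>2 * w x + (cmod (?q x))\<^sup>2 * w x) / 2"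
    proof -
      have "cmod (?a x) * cmod (?q x) \<le> ((cmod (?a x))\<^sup>2 + (cmod (?q x))\<^sup>2) / 2"
        using sum_squares_bound[of "cmod (?a x)" "cmod (?q x)"] by simp
      then show ?thesis using w0[OF x] mult_right_mono by (fastforce simp: algebra_simps)
    qed
    finally show "cmod (ef 1 x * ?a x * cnj (?q x) * complex_of_real (w x))
        \<le> ((cmod (?a x))\<^sup>2 * w x + (cmod (?q x))\<^sup>2 * w x) / 2" .
  qed
  also have "\<dots> = (integral {-pi..pi} (\<lambda>x. (cmod (?a x))\<^sup>2 * w x) + integral {-pi..pi} (\<lambda>x. (cmod (?q x))\<^sup>2 * w x)) / 2"
    by (simp only: Henstock_Kurzweil_Integration.integral_divide, subst integral_add)
       (auto intro!: integrable_continuous_interval continuous_intros ac qc cw)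
  also have "\<dots> = 1" using gq_facts(3)[OF cw wp] by simp
  finally show ?thesis .
qed

lemma re_id:
  fixes a b :: complex assumes "cmod a = 1" "cmod b = 1"
  shows "(cmod (a - b))\<^sup>2 * k = Re (2 * cnj a * ((a - b) * complex_of_real k))"
proof -
  have a: "(Re a)\<^sup>2 + (Im a)\<^sup>2 = 1" using assms(1) cmod_power2[of a] by simp
  have b: "(Re b)\<^sup>2 + (Im b)\<^sup>2 = 1" using assms(2) cmod_power2[of b] by simp
  have e: "(cmod (a - b))\<^sup>2 = (Re a - Re b)\<^sup>2 + (Im a - Im b)\<^sup>2" by (simp add: cmod_power2)
  have f: "Re (cnj a * (a - b)) = (Re a)\<^sup>2 + (Im a)\<^sup>2 - (Re a * Re b + Im a * Im b)"
    by (simp add: power2_eq_square algebra_simps)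
  have h: "(cmod (a - b))\<^sup>2 = 2 * Re (cnj a * (a - b))"
    unfolding e f using a b by (simp add: power2_diff)
  have "Re (2 * cnj a * ((a - b) * complex_of_real k)) = 2 * Re (cnj a * (a - b)) * k"
    by (simp add: algebra_simps)
  then show ?thesis using h by simp
qed



theorem lemma1:
  fixes V :: "real \<Rightarrow> real" and \<rho> :: "real \<Rightarrow> real"
    and a b C1 C2 :: real
  assumes V_cont: "continuous_on {-1..1} V"
    and V_nonneg: "\<forall>t\<in>{-1..1}. 0 \<le> V t"
    and C2_1: "\<forall>x\<in>{-pi<..<pi}. (\<lambda>t. V (cos t)) differentiable at x"
    and C2_2: "\<forall>x\<in>{-pi<..<pi}. deriv (\<lambda>t. V (cos t)) differentiable at x"
    and C2_3: "continuous_on {-pi<..<pi} (deriv (deriv (\<lambda>t. V (cos t))))"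
    and rho: "limit_density V \<rho>"
    and ab: "a < b" "{a<..<b} \<subseteq> supp_dens \<rho>"
    and C1: "C1 > 0" and C2: "C2 > 0"
    and V3_ex: "\<forall>x\<in>{a<..<b}. deriv (deriv (\<lambda>t. V (cos t))) differentiable at x"
    and V3_bd: "\<forall>x\<in>{a<..<b}. \<bar>deriv (deriv (deriv (\<lambda>t. V (cos t)))) x\<bar> \<le> C1"
    and rho_lb: "AE x in lborel. x \<in> {a<..<b} \<longrightarrow> C2 \<le> \<rho> x"
  shows "\<forall>\<delta>>0. \<forall>n\<ge>1. \<forall>l\<in>{-pi..pi}.
     cmod (integral {-pi..pi} (\<lambda>m. (exp (\<i> * of_real l) - exp (\<i> * of_real m))
                                      * of_real ((cmod (Kn V n l m))\<^sup>2)))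
       \<le> 1/2 * ((cmod (psi V n (n - 1) l))\<^sup>2 + (cmod (psi V n n l))\<^sup>2)
   \<and> integral {-pi..pi} (\<lambda>m. (cmod (exp (\<i> * of_real l) - exp (\<i> * of_real m)))\<^sup>2
                                 * (cmod (Kn V n l m))\<^sup>2)
       \<le> (cmod (psi V n (n - 1) l))\<^sup>2 + (cmod (psi V n n l))\<^sup>2
   \<and> integral {-pi..pi} (\<lambda>l'. integral {-pi..pi} (\<lambda>m.
        (cmod (exp (\<i> * of_real l') - exp (\<i> * of_real m)))\<^sup>2 * (cmod (Kn V n l' m))\<^sup>2)) \<le> 2
   \<and> integral {m \<in> {-pi..pi}. cmod (exp (\<i> * of_real l) - exp (\<i> * of_real m)) > \<delta>}
        (\<lambda>m. (cmod (Kn V n l m))\<^sup>2)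
       \<le> \<delta> powr (-2) * ((cmod (psi V n (n - 1) l))\<^sup>2 + (cmod (psi V n n l))\<^sup>2)
   \<and> integral {-pi..pi} (\<lambda>l'. integral
        {m \<in> {-pi..pi}. cmod (exp (\<i> * of_real l') - exp (\<i> * of_real m)) > \<delta>}
        (\<lambda>m. (cmod (Kn V n l' m))\<^sup>2)) \<le> 2 * \<delta> powr (-2)"
proof (intro allI impI ballI)
  fix \<delta> :: real and n :: nat and l :: real
  assume \<delta>: "\<delta> > 0" and n: "n \<ge> 1" and l: "l \<in> {-pi..pi}"
  define w where "w = wt V n"
  define s where "s = (\<lambda>x. exp (- real n * V (cos x) / 2))"
  have vc: "continuous_on UNIV (\<lambda>x. V (cos x))"
    by (rule continuous_on_compose2[OF V_cont]) (auto intro!: continuous_intros)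
  have vc': "continuous_on S (\<lambda>x. V (cos x))" for S using vc continuous_on_subset by blast
  have cw: "cc w" unfolding w_def wt_def by (intro continuous_intros vc')
  have wp: "\<And>x. x \<in> {-pi..pi} \<Longrightarrow> 0 < w x" unfolding w_def wt_def by simp
  have s0: "\<And>x. 0 \<le> s x" unfolding s_def by simp
  have sw: "\<And>x. (s x)\<^sup>2 = w x" unfolding s_def w_def wt_def
    by (simp add: power2_eq_square exp_add[symmetric])
  have sc: "continuous_on S s" for S unfolding s_def by (intro continuous_intros vc') auto
  have psi_eq: "\<And>j x. psi V n j x = gq w j x * complex_of_real (s x)"
    by (simp add: psi_def OP_def gq_def w_def s_def wt_def)
  have psic: "continuous_on S (psi V n j)" for j S
  proof -
    have "psi V n j = (\<lambda>x. gq w j x * complex_of_real (s x))" by (rule ext, rule psi_eq)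
    moreover have "continuous_on S (\<lambda>x. gq w j x * complex_of_real (s x))"
      by (intro continuous_intros sc gq_facts(1)[OF cw wp])
    ultimately show ?thesis by simp
  qed
  have Kc: "continuous_on S (Kn V n t)" for t S
  proof -
    have "Kn V n t = (\<lambda>m. \<Sum>j<n. psi V n j t * cnj (psi V n j m))" by (rule ext) (simp add: Kn_def)
    moreover have "continuous_on S (\<lambda>m. \<Sum>j<n. psi V n j t * cnj (psi V n j m))"
      by (intro continuous_intros psic)
    ultimately show ?thesis by simp
  qed
  define c where "c = ip w (\<lambda>x. ef 1 x * gq w (n - 1) x) (gq w n)"
  have cb: "cmod c \<le> 1" unfolding c_def by (rule c_bound[OF cw wp])
  define B where "B = (\<lambda>x. (cmod (psi V n (n - 1) x))\<^sup>2 + (cmod (psi V n n x))\<^sup>2)"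
  have B0: "0 \<le> B x" for x unfolding B_def by simp
  have Kt: "\<And>t m. Kn V n t m = (\<Sum>j<n. psi V n j t * cnj (psi V n j m))" by (simp add: Kn_def)
  have Iform: "integral {-pi..pi} (\<lambda>m. (exp (\<i> * of_real t) - exp (\<i> * of_real m))
        * complex_of_real ((cmod (Kn V n t m))\<^sup>2)) = cnj (psi V n (n - 1) t) * c * psi V n n t" for t
    by (rule key[OF cw wp s0 sw n psi_eq Kt c_def])
  have I1: "cmod (integral {-pi..pi} (\<lambda>m. (exp (\<i> * of_real t) - exp (\<i> * of_real m))
        * complex_of_real ((cmod (Kn V n t m))\<^sup>2))) \<le> 1/2 * B t" for t
  proof -
    have "cmod (cnj (psi V n (n - 1) t) * c * psi V n n t)
        = cmod (psi V n (n - 1) t) * cmod (psi V n n t) * cmod c" by (simp add: norm_mult)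
    also have "\<dots> \<le> cmod (psi V n (n - 1) t) * cmod (psi V n n t) * 1"
      by (rule mult_left_mono[OF cb]) simp
    also have "\<dots> \<le> 1/2 * B t"
      using sum_squares_bound[of "cmod (psi V n (n - 1) t)" "cmod (psi V n n t)"] by (simp add: B_def)
    finally show ?thesis unfolding Iform .
  qed
  have J: "integral {-pi..pi} (\<lambda>m. (cmod (exp (\<i> * of_real t) - exp (\<i> * of_real m)))\<^sup>2
        * (cmod (Kn V n t m))\<^sup>2) \<le> B t" for t
  proof -
    define F where "F = (\<lambda>m. 2 * cnj (exp (\<i> * of_real t)) * ((exp (\<i> * of_real t) - exp (\<i> * of_real m))
        * complex_of_real ((cmod (Kn V n t m))\<^sup>2)))"
    have Fint: "F integrable_on {-pi..pi}" unfolding F_def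
      by (intro integrable_continuous_interval continuous_intros Kc)
    have "integral {-pi..pi} (\<lambda>m. (cmod (exp (\<i> * of_real t) - exp (\<i> * of_real m)))\<^sup>2
        * (cmod (Kn V n t m))\<^sup>2) = integral {-pi..pi} (Re \<circ> F)"
      unfolding F_def o_def by (intro integral_cong) (simp add: re_id)
    also have "\<dots> = Re (integral {-pi..pi} F)" by (rule integral_linear[OF Fint bounded_linear_Re])
    also have "integral {-pi..pi} F = 2 * cnj (exp (\<i> * of_real t)) * integral {-pi..pi} (\<lambda>m. (exp (\<i> * of_real t) - exp (\<i> * of_real m))
        * complex_of_real ((cmod (Kn V n t m))\<^sup>2))"
      unfolding F_def by (rule Henstock_Kurzweil_Integration.integral_mult_right)
    also have "Re \<dots> \<le> cmod \<dots>" by (rule complex_Re_le_cmod)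
    also have "\<dots> = 2 * cmod (integral {-pi..pi} (\<lambda>m. (exp (\<i> * of_real t) - exp (\<i> * of_real m))
        * complex_of_real ((cmod (Kn V n t m))\<^sup>2)))" by (simp add: norm_mult)
    also have "\<dots> \<le> 2 * (1/2 * B t)" using I1[of t] by simp
    finally show ?thesis by simp
  qed
  have psi2: "integral {-pi..pi} (\<lambda>x. (cmod (psi V n j x))\<^sup>2) = 1" for j
  proof -
    have "(\<lambda>x. (cmod (psi V n j x))\<^sup>2) = (\<lambda>x. (cmod (gq w j x))\<^sup>2 * w x)"
      using s0 by (auto simp: psi_eq norm_mult power_mult_distrib sw[symmetric])
    then show ?thesis using gq_facts(3)[OF cw wp] by simp
  qed
  have Bint: "B integrable_on {-pi..pi}" unfolding B_def
    by (intro integrable_continuous_interval continuous_intros psic)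
  have intB: "integral {-pi..pi} B = 2" unfolding B_def
    by (subst integral_add) (auto simp: psi2 intro!: integrable_continuous_interval continuous_intros psic)
  have dp: "\<delta> powr (-2) = 1 / \<delta>\<^sup>2" using \<delta> by (simp add: powr_minus divide_inverse)
  have dp0: "0 \<le> \<delta> powr (-2)" by simp
  have C4: "integral {m \<in> {-pi..pi}. cmod (exp (\<i> * of_real t) - exp (\<i> * of_real m)) > \<delta>}
        (\<lambda>m. (cmod (Kn V n t m))\<^sup>2) \<le> \<delta> powr (-2) * B t" for t
  proof -
    define S where "S = {m \<in> {-pi..pi}. cmod (exp (\<i> * of_real t) - exp (\<i> * of_real m)) > \<delta>}"
    define f where "f = (\<lambda>m. (cmod (Kn V n t m))\<^sup>2)"
    define g where "g = (\<lambda>m. \<delta> powr (-2) * ((cmod (exp (\<i> * of_real t) - exp (\<i> * of_real m)))\<^sup>2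
        * (cmod (Kn V n t m))\<^sup>2))"
    have SI: "S \<inter> {-pi..pi} = S" unfolding S_def by auto
    show ?thesis unfolding S_def[symmetric] f_def[symmetric]
    proof (cases "f integrable_on S")
      case True
      have "integral S f = integral {-pi..pi} (\<lambda>m. if m \<in> S then f m else 0)"
        using integral_restrict_Int[of "{-pi..pi}" S f] SI by simp
      also have "\<dots> \<le> integral {-pi..pi} g"
      proof (rule integral_le)
        show "(\<lambda>m. if m \<in> S then f m else 0) integrable_on {-pi..pi}"
          using integrable_restrict_Int[of S f "{-pi..pi}"] SI True by simp
        show "g integrable_on {-pi..pi}" unfolding g_def
          by (intro integrable_continuous_interval continuous_intros Kc)
        fix m assume m: "m \<in> {-pi..pi}"
        show "(if m \<in> S then f m else 0) \<le> g m"
        proof (cases "m \<in> S")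
          case True
          then have d: "\<delta> < cmod (exp (\<i> * of_real t) - exp (\<i> * of_real m))" unfolding S_def by simp
          then have "\<delta>\<^sup>2 \<le> (cmod (exp (\<i> * of_real t) - exp (\<i> * of_real m)))\<^sup>2"
            using \<delta> by (intro power_mono) auto
          then have "1 \<le> \<delta> powr (-2) * (cmod (exp (\<i> * of_real t) - exp (\<i> * of_real m)))\<^sup>2"
            using \<delta> by (simp add: dp)
          then have "1 * f m \<le> \<delta> powr (-2) * (cmod (exp (\<i> * of_real t) - exp (\<i> * of_real m)))\<^sup>2 * f m"
            by (rule mult_right_mono) (simp add: f_def)
          then show ?thesis using True by (simp add: g_def f_def mult.assoc)
        next
          case False
          then show ?thesis by (simp add: g_def)
        qed
      qed
      also have "integral {-pi..pi} g = \<delta> powr (-2) * integral {-pi..pi} (\<lambda>m.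
          (cmod (exp (\<i> * of_real t) - exp (\<i> * of_real m)))\<^sup>2 * (cmod (Kn V n t m))\<^sup>2)"
        unfolding g_def by (rule Henstock_Kurzweil_Integration.integral_mult_right)
      also have "\<dots> \<le> \<delta> powr (-2) * B t" by (rule mult_left_mono[OF J dp0])
      finally show "integral S f \<le> \<delta> powr (-2) * B t" .
    next
      case False
      then show "integral S f \<le> \<delta> powr (-2) * B t"
        using B0[of t] dp0 by (simp add: not_integrable_integral)
    qed
  qed
  have C3: "integral {-pi..pi} (\<lambda>l'. integral {-pi..pi} (\<lambda>m.
        (cmod (exp (\<i> * of_real l') - exp (\<i> * of_real m)))\<^sup>2 * (cmod (Kn V n l' m))\<^sup>2)) \<le> 2"
  proof (cases "(\<lambda>l'. integral {-pi..pi} (\<lambda>m.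
        (cmod (exp (\<i> * of_real l') - exp (\<i> * of_real m)))\<^sup>2 * (cmod (Kn V n l' m))\<^sup>2)) integrable_on {-pi..pi}")
    case True
    have "integral {-pi..pi} (\<lambda>l'. integral {-pi..pi} (\<lambda>m.
        (cmod (exp (\<i> * of_real l') - exp (\<i> * of_real m)))\<^sup>2 * (cmod (Kn V n l' m))\<^sup>2)) \<le> integral {-pi..pi} B"
      by (rule integral_le[OF True Bint J])
    then show ?thesis using intB by simp
  qed (simp add: not_integrable_integral)
  have C5: "integral {-pi..pi} (\<lambda>l'. integral
        {m \<in> {-pi..pi}. cmod (exp (\<i> * of_real l') - exp (\<i> * of_real m)) > \<delta>}
        (\<lambda>m. (cmod (Kn V n l' m))\<^sup>2)) \<le> 2 * \<delta> powr (-2)"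
  proof (cases "(\<lambda>l'. integral
        {m \<in> {-pi..pi}. cmod (exp (\<i> * of_real l') - exp (\<i> * of_real m)) > \<delta>}
        (\<lambda>m. (cmod (Kn V n l' m))\<^sup>2)) integrable_on {-pi..pi}")
    case True
    have "integral {-pi..pi} (\<lambda>l'. integral
        {m \<in> {-pi..pi}. cmod (exp (\<i> * of_real l') - exp (\<i> * of_real m)) > \<delta>}
        (\<lambda>m. (cmod (Kn V n l' m))\<^sup>2)) \<le> integral {-pi..pi} (\<lambda>x. \<delta> powr (-2) * B x)"
      by (rule integral_le[OF True _ C4]) (unfold B_def, intro integrable_continuous_interval continuous_intros psic)
    also have "\<dots> = \<delta> powr (-2) * 2"
      by (simp only: Henstock_Kurzweil_Integration.integral_mult_right intB)
    finally show ?thesis by simp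
  qed (simp add: not_integrable_integral)
  show "cmod (integral {-pi..pi} (\<lambda>m. (exp (\<i> * of_real l) - exp (\<i> * of_real m))
                                      * of_real ((cmod (Kn V n l m))\<^sup>2)))
       \<le> 1/2 * ((cmod (psi V n (n - 1) l))\<^sup>2 + (cmod (psi V n n l))\<^sup>2)
   \<and> integral {-pi..pi} (\<lambda>m. (cmod (exp (\<i> * of_real l) - exp (\<i> * of_real m)))\<^sup>2
                                 * (cmod (Kn V n l m))\<^sup>2)
       \<le> (cmod (psi V n (n - 1) l))\<^sup>2 + (cmod (psi V n n l))\<^sup>2
   \<and> integral {-pi..pi} (\<lambda>l'. integral {-pi..pi} (\<lambda>m.
        (cmod (exp (\<i> * of_real l') - exp (\<i> * of_real m)))\<^sup>2 * (cmod (Kn V n l' m))\<^sup>2)) \<le> 2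
   \<and> integral {m \<in> {-pi..pi}. cmod (exp (\<i> * of_real l) - exp (\<i> * of_real m)) > \<delta>}
        (\<lambda>m. (cmod (Kn V n l m))\<^sup>2)
       \<le> \<delta> powr (-2) * ((cmod (psi V n (n - 1) l))\<^sup>2 + (cmod (psi V n n l))\<^sup>2)
   \<and> integral {-pi..pi} (\<lambda>l'. integral
        {m \<in> {-pi..pi}. cmod (exp (\<i> * of_real l') - exp (\<i> * of_real m)) > \<delta>}
        (\<lambda>m. (cmod (Kn V n l' m))\<^sup>2)) \<le> 2 * \<delta> powr (-2)"
    using I1[of l] J[of l] C3 C4[of l] C5 unfolding B_def by blast
qed


end
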